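(* Let $(a_0,\ldots,a_n)$ be a finite sequence of positive integers. For every $\varepsilon>0$ there is $m_0>0$ such that for every integer $m\ge m_0$ and every positive integer $N$, $$\Phi(\beta^{N+1})-\Phi(\beta^N)<\varepsilon.$$
   Context: For positive integers $d_0,d_1,\ldots$, $[d_0,d_1,d_2,\ldots]$ denotes the continued fraction $\cfrac{1}{d_0+\cfrac{1}{d_1+\cfrac{1}{d_2+\cdots}}}$, and for $\beta=[d_0,d_1,\ldots]$ we write $\alpha_j(\beta)=[d_j,d_{j+1},\ldots]$. $\Phi(\beta)=\sum_{k\ge 0}\alpha_0(\beta)\cdots\alpha_{k-1}(\beta)\log\frac{1}{\alpha_k(\beta)}$ is the Yoccoz Brjuno function. For integers $m\ge1$, $N\ge1$, $\beta^N$ is the number whose digits (indexed from $0$) are $a_0,\ldots,a_n$ in positions $0,\ldots,n$, $N$ in position $n+m$, and $1$ in all other positions. *)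

theory Defs
  imports Complex_Main
begin

fun cf_trunc :: "(nat \<Rightarrow> nat) \<Rightarrow> nat \<Rightarrow> real" where
  "cf_trunc d 0 = 0"
| "cf_trunc d (Suc k) = 1 / (real (d 0) + cf_trunc (\<lambda>i. d (Suc i)) k)"

definition cf :: "(nat \<Rightarrow> nat) \<Rightarrow> real" where
  "cf d = lim (\<lambda>k. cf_trunc d k)"

definition cf_alpha :: "(nat \<Rightarrow> nat) \<Rightarrow> nat \<Rightarrow> real" where
  "cf_alpha d j = cf (\<lambda>i. d (i + j))"

definition brjuno_Phi :: "(nat \<Rightarrow> nat) \<Rightarrow> real" where
  "brjuno_Phi d = (\<Sum>k. (\<Prod>i<k. cf_alpha d i) * ln (1 / cf_alpha d k))"

text \<open>Digits of beta^N: a_0..a_n at positions 0..n, N at position n+m, 1 elsewhere.\<close>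
definition beta_digits :: "(nat \<Rightarrow> nat) \<Rightarrow> nat \<Rightarrow> nat \<Rightarrow> nat \<Rightarrow> nat \<Rightarrow> nat" where
  "beta_digits a n m N i = (if i \<le> n then a i else if i = n + m then N else 1)"

end

theory Submission
  imports Defs
begin


lemma cf_trunc_nonneg: "cf_trunc d k \<ge> 0"
  by (induction k arbitrary: d) auto

definition gold :: real where "gold = (sqrt 5 - 1) / 2"

lemma gold_props: "0 < gold" "gold < 1" "gold * (1 + gold) = 1"
proof -
  have s: "sqrt 5 ^ 2 = (5::real)" by simp
  have "1 < sqrt (5::real)" by (simp add: real_less_rsqrt)
  moreover have "sqrt (5::real) < 3" by (rule real_less_lsqrt) auto
  ultimately show "0 < gold" "gold < 1" unfolding gold_def by auto
  show "gold * (1 + gold) = 1" unfolding gold_def using s by (simp add: field_simps power2_eq_square)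
qed

lemma ones_conv: "(\<lambda>k. cf_trunc (\<lambda>_. 1) k) \<longlonglongrightarrow> gold"
proof -
  have rec: "cf_trunc (\<lambda>_. 1) (Suc k) = 1 / (1 + cf_trunc (\<lambda>_. 1) k)" for k by simp
  have b: "\<bar>cf_trunc (\<lambda>_. 1) k - gold\<bar> \<le> gold ^ Suc k" for k
  proof (induction k)
    case 0 then show ?case using gold_props by simp
  next
    case (Suc k)
    define F where "F = cf_trunc (\<lambda>_. 1) k"
    have F0: "F \<ge> 0" unfolding F_def by (rule cf_trunc_nonneg)
    have ginv: "gold = 1 / (1 + gold)" using gold_props by (simp add: field_simps)
    have "cf_trunc (\<lambda>_. 1) (Suc k) - gold = 1/(1+F) - 1/(1+gold)" using rec ginv F_def by simp
    also have "\<dots> = (gold - F) / ((1+F)*(1+gold))" using F0 gold_props by (simp add: field_simps)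
    also have "\<dots> = (gold - F) / (1+F) * (1/(1+gold))" by simp
    also have "\<dots> = gold * (gold - F) / (1+F)" using ginv by simp
    finally have eq: "\<bar>cf_trunc (\<lambda>_. 1) (Suc k) - gold\<bar> = gold * \<bar>F - gold\<bar> / (1+F)"
      using F0 gold_props by (simp add: abs_mult abs_minus_commute)
    have "gold * \<bar>F - gold\<bar> / (1+F) \<le> gold * \<bar>F - gold\<bar>"
      using F0 gold_props by (simp add: divide_le_eq mult_le_cancel_left) (simp add: mult_le_cancel_left1 add_increasing2)
    also have "\<dots> \<le> gold * gold ^ Suc k" using Suc F_def gold_props by (simp add: mult_left_mono)
    finally show ?case using eq by simp
  qed
  have L: "(\<lambda>k. gold ^ Suc k) \<longlonglongrightarrow> 0"
    using gold_props by (intro LIMSEQ_Suc[where f="\<lambda>k. gold ^ k"] LIMSEQ_power_zero) auto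
  have "(\<lambda>k. \<bar>cf_trunc (\<lambda>_. 1) k - gold\<bar>) \<longlonglongrightarrow> 0"
  proof (rule tendsto_sandwich[OF _ _ tendsto_const L])
    show "\<forall>\<^sub>F n in sequentially. 0 \<le> \<bar>cf_trunc (\<lambda>_. 1) n - gold\<bar>" by simp
    show "\<forall>\<^sub>F n in sequentially. \<bar>cf_trunc (\<lambda>_. 1) n - gold\<bar> \<le> gold ^ Suc n"
      by (rule always_eventually) (use b in blast)
  qed
  then have "(\<lambda>k. cf_trunc (\<lambda>_. 1) k - gold) \<longlonglongrightarrow> 0" by (rule tendsto_rabs_zero_cancel)
  then show ?thesis by (rule LIM_zero_cancel)
qed



definition tailones :: "nat \<Rightarrow> (nat \<Rightarrow> nat) \<Rightarrow> bool" where
  "tailones K d \<longleftrightarrow> (\<forall>i. d i \<ge> 1) \<and> (\<forall>i\<ge>K. d i = 1)"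

lemma tailones_shift: "tailones K d \<Longrightarrow> tailones K (\<lambda>i. d (i + j))"
  unfolding tailones_def by auto

lemma tailones_Suc: "tailones K d \<Longrightarrow> tailones K (\<lambda>i. d (Suc i))"
  unfolding tailones_def by auto

lemma cf_ones: "cf (\<lambda>_. 1) = gold"
  unfolding cf_def using ones_conv by (rule limI)

lemma cf_conv: "tailones K d \<Longrightarrow> \<exists>L. cf_trunc d \<longlonglongrightarrow> L \<and> 0 < L \<and> L \<le> 1"
proof (induction K arbitrary: d)
  case 0
  then have "d = (\<lambda>_. 1)" unfolding tailones_def by auto
  then show ?case using ones_conv gold_props by auto
next
  case (Suc K)
  have "tailones K (\<lambda>i. d (Suc i))" using Suc.prems unfolding tailones_def by auto
  from Suc.IH[OF this] obtain L where L: "cf_trunc (\<lambda>i. d (Suc i)) \<longlonglongrightarrow> L" "0 < L" "L \<le> 1" by blast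
  have d0: "real (d 0) \<ge> 1" using Suc.prems unfolding tailones_def by auto
  have "(\<lambda>k. 1 / (real (d 0) + cf_trunc (\<lambda>i. d (Suc i)) k)) \<longlonglongrightarrow> 1 / (real (d 0) + L)"
    using L d0 by (intro tendsto_intros) auto
  then have "(\<lambda>k. cf_trunc d (Suc k)) \<longlonglongrightarrow> 1 / (real (d 0) + L)" by simp
  then have "cf_trunc d \<longlonglongrightarrow> 1 / (real (d 0) + L)" by (rule LIMSEQ_imp_Suc)
  moreover have "0 < 1 / (real (d 0) + L)" using d0 L by auto
  moreover have "1 / (real (d 0) + L) \<le> 1" using d0 L by auto
  ultimately show ?case by blast
qed

lemma cf_facts: "tailones K d \<Longrightarrow> cf_trunc d \<longlonglongrightarrow> cf d \<and> 0 < cf d \<and> cf d \<le> 1"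
  using cf_conv[of K d] unfolding cf_def by (auto simp: limI)

lemma cf_rec: assumes "tailones K d" shows "cf d = 1 / (real (d 0) + cf (\<lambda>i. d (Suc i)))"
proof -
  have T: "tailones K (\<lambda>i. d (Suc i))" using assms by (rule tailones_Suc)
  note F = cf_facts[OF T]
  have d0: "real (d 0) \<ge> 1" using assms unfolding tailones_def by auto
  have "(\<lambda>k. 1 / (real (d 0) + cf_trunc (\<lambda>i. d (Suc i)) k)) \<longlonglongrightarrow> 1 / (real (d 0) + cf (\<lambda>i. d (Suc i)))"
    using F d0 by (intro tendsto_intros) auto
  then have "(\<lambda>k. cf_trunc d (Suc k)) \<longlonglongrightarrow> 1 / (real (d 0) + cf (\<lambda>i. d (Suc i)))" by simp
  then have "cf_trunc d \<longlonglongrightarrow> 1 / (real (d 0) + cf (\<lambda>i. d (Suc i)))" by (rule LIMSEQ_imp_Suc)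
  then show ?thesis unfolding cf_def by (rule limI)
qed

lemma alpha_bounds: "tailones K d \<Longrightarrow> 0 < cf_alpha d j \<and> cf_alpha d j \<le> 1"
  unfolding cf_alpha_def using cf_facts[OF tailones_shift] by blast

lemma alpha_rec: assumes "tailones K d"
  shows "cf_alpha d j = 1 / (real (d j) + cf_alpha d (Suc j))"
  unfolding cf_alpha_def using cf_rec[OF tailones_shift[OF assms, of j]] by simp

lemma alpha_tail: assumes "tailones K d" "j \<ge> K" shows "cf_alpha d j = gold"
proof -
  have "(\<lambda>i. d (i + j)) = (\<lambda>_. 1)" using assms unfolding tailones_def by auto
  then show ?thesis unfolding cf_alpha_def using cf_ones by simp
qed

definition bterm :: "(nat \<Rightarrow> nat) \<Rightarrow> nat \<Rightarrow> real" where
  "bterm d k = (\<Prod>i<k. cf_alpha d i) * ln (1 / cf_alpha d k)"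

lemma Phi_bterm: "brjuno_Phi d = suminf (bterm d)"
  unfolding brjuno_Phi_def bterm_def ..

lemma bterm_nonneg: "tailones K d \<Longrightarrow> bterm d k \<ge> 0"
  unfolding bterm_def using alpha_bounds
  by (intro mult_nonneg_nonneg prod_nonneg) (auto intro: less_imp_le)

lemma bterm_summable: assumes "tailones K d" shows "summable (bterm d)"
proof -
  have p: "(\<Prod>i<k + K. cf_alpha d i) = (\<Prod>i<K. cf_alpha d i) * gold ^ k" for k
  proof (induction k)
    case 0 then show ?case by simp
  next
    case (Suc k)
    have "(\<Prod>i<Suc k + K. cf_alpha d i) = (\<Prod>i<k + K. cf_alpha d i) * cf_alpha d (k + K)" by simp
    also have "cf_alpha d (k + K) = gold" using alpha_tail[OF assms] by simp
    finally show ?case using Suc by simp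
  qed
  define c where "c = (\<Prod>i<K. cf_alpha d i) * ln (1 / gold)"
  have eq: "bterm d (k + K) = c * gold ^ k" for k
    unfolding bterm_def p c_def using alpha_tail[OF assms, of "k + K"] by simp
  have "summable (\<lambda>k. c * gold ^ k)"
    using gold_props by (intro summable_mult summable_geometric) auto
  then have "summable (\<lambda>k. bterm d (k + K))" unfolding eq .
  then show ?thesis by (rule summable_iff_shift[THEN iffD1])
qed

lemma Phi_nonneg: assumes "tailones K d" shows "brjuno_Phi d \<ge> 0"
  unfolding Phi_bterm by (rule suminf_nonneg[OF bterm_summable[OF assms] bterm_nonneg[OF assms]])

lemma Phi_rec: assumes "tailones K d"
  shows "brjuno_Phi d = ln (1 / cf d) + cf d * brjuno_Phi (\<lambda>i. d (Suc i))"
proof -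
  have T: "tailones K (\<lambda>i. d (Suc i))" using assms by (rule tailones_Suc)
  have a0: "cf_alpha d 0 = cf d" unfolding cf_alpha_def by simp
  have aS: "cf_alpha d (Suc i) = cf_alpha (\<lambda>i. d (Suc i)) i" for i unfolding cf_alpha_def by simp
  have bS: "bterm d (Suc k) = cf d * bterm (\<lambda>i. d (Suc i)) k" for k
    unfolding bterm_def prod.lessThan_Suc_shift a0 aS by simp
  have "suminf (bterm d) = bterm d 0 + (\<Sum>k. bterm d (Suc k))"
    using suminf_split_head[OF bterm_summable[OF assms]] by simp
  also have "(\<Sum>k. bterm d (Suc k)) = cf d * suminf (bterm (\<lambda>i. d (Suc i)))"
    unfolding bS by (rule suminf_mult[OF bterm_summable[OF T]])
  also have "bterm d 0 = ln (1 / cf d)" unfolding bterm_def a0 by simp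
  finally show ?thesis unfolding Phi_bterm .
qed



lemma ln_diff_le: fixes a b :: real assumes "a \<ge> 1" "b \<ge> 1" shows "\<bar>ln a - ln b\<bar> \<le> \<bar>a - b\<bar>"
proof -
  have h: "ln x - ln y \<le> \<bar>x - y\<bar>" if "x \<ge> 1" "y \<ge> 1" for x y :: real
  proof -
    have "ln x - ln y = ln (x / y)" using that by (simp add: ln_div)
    also have "\<dots> \<le> x / y - 1" using that by (intro ln_le_minus_one) auto
    also have "\<dots> = (x - y) / y" using that by (simp add: field_simps)
    also have "\<dots> \<le> \<bar>x - y\<bar> / y" using that by (intro divide_right_mono) auto
    also have "\<dots> \<le> \<bar>x - y\<bar> / 1" using that by (intro divide_left_mono) auto
    also have "\<dots> = \<bar>x - y\<bar>" by simp
    finally show ?thesis .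
  qed
  show ?thesis using h[OF assms] h[OF assms(2,1)] by (simp add: abs_minus_commute)
qed

lemma tri3: fixes u v w c P :: real assumes "c \<ge> 0" "P \<ge> 0"
  shows "\<bar>u + v * P + c * w\<bar> \<le> \<bar>u\<bar> + \<bar>v\<bar> * P + c * \<bar>w\<bar>"
proof -
  have "\<bar>v * P\<bar> = \<bar>v\<bar> * P" "\<bar>c * w\<bar> = c * \<bar>w\<bar>" using assms by (auto simp: abs_mult)
  then show ?thesis using abs_triangle_ineq[of "u + v*P" "c*w"] abs_triangle_ineq[of u "v*P"] by linarith
qed

lemma step_bound:
  fixes dd s s' P P' :: real
  assumes "dd \<ge> 1" "s > 0" "s' > 0" "P \<ge> 0"
  shows "\<bar>(ln (1 / (1/(dd+s))) + (1/(dd+s)) * P) - (ln (1 / (1/(dd+s'))) + (1/(dd+s')) * P')\<bar>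
         \<le> \<bar>s - s'\<bar> * (1 + P) + (1/(dd+s')) * \<bar>P - P'\<bar>"
proof -
  have l: "\<bar>ln (dd+s) - ln (dd+s')\<bar> \<le> \<bar>s - s'\<bar>" using ln_diff_le[of "dd+s" "dd+s'"] assms by simp
  have a: "\<bar>1/(dd+s) - 1/(dd+s')\<bar> \<le> \<bar>s - s'\<bar>"
  proof -
    have "1/(dd+s) - 1/(dd+s') = (s' - s) / ((dd+s)*(dd+s'))" using assms by (simp add: field_simps)
    moreover have "(dd+s)*(dd+s') \<ge> 1*1" using assms by (intro mult_mono) auto
    ultimately have "\<bar>1/(dd+s) - 1/(dd+s')\<bar> = \<bar>s' - s\<bar> / ((dd+s)*(dd+s'))" by (simp add: abs_div)
    also have "\<dots> \<le> \<bar>s' - s\<bar> / 1" using \<open>(dd+s)*(dd+s') \<ge> 1*1\<close> by (intro divide_left_mono) auto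
    finally show ?thesis by (simp add: abs_minus_commute)
  qed
  have "(ln (1 / (1/(dd+s))) + (1/(dd+s)) * P) - (ln (1 / (1/(dd+s'))) + (1/(dd+s')) * P')
      = (ln (dd+s) - ln (dd+s')) + (1/(dd+s) - 1/(dd+s')) * P + (1/(dd+s')) * (P - P')"
    by (simp add: algebra_simps diff_divide_distrib)
  also have "\<bar>\<dots>\<bar> \<le> \<bar>ln (dd+s) - ln (dd+s')\<bar> + \<bar>1/(dd+s) - 1/(dd+s')\<bar> * P + (1/(dd+s')) * \<bar>P - P'\<bar>"
    using assms by (intro tri3) auto
  also have "\<dots> \<le> \<bar>s - s'\<bar> + \<bar>s - s'\<bar> * P + (1/(dd+s')) * \<bar>P - P'\<bar>"
  proof -
    have "\<bar>1/(dd+s) - 1/(dd+s')\<bar> * P \<le> \<bar>s - s'\<bar> * P" using a assms by (intro mult_right_mono) auto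
    then show ?thesis using l by linarith
  qed
  finally show ?thesis by (simp add: algebra_simps)
qed

lemma core:
  fixes M :: nat and D r K B :: real and dg al al' Ph Ph' :: "nat \<Rightarrow> real"
  assumes D: "D \<ge> 1" and r: "r = (D+1)/(D+2)"
    and dg: "\<forall>j<M. 1 \<le> dg j"
    and ar: "\<forall>j<M. al j = 1/(dg j + al (Suc j))" and ar': "\<forall>j<M. al' j = 1/(dg j + al' (Suc j))"
    and pos: "\<forall>j\<le>M. 0 < al j \<and> al j \<le> 1" and pos': "\<forall>j\<le>M. 0 < al' j \<and> al' j \<le> 1"
    and lo: "\<forall>j<M. 1/(D+1) \<le> al j \<and> 1/(D+1) \<le> al' j"
    and hi: "\<forall>j<M. al j \<le> r \<and> al' j \<le> r"
    and Pr: "\<forall>j<M. Ph j = ln (1 / al j) + al j * Ph (Suc j)"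
    and Pr': "\<forall>j<M. Ph' j = ln (1 / al' j) + al' j * Ph' (Suc j)"
    and T: "Ph M \<ge> 0"
    and K: "K = (D+2) * ln (D+1)"
    and B1: "\<bar>al M - al' M\<bar> * (1 + K + Ph M) \<le> B" and B2: "\<bar>Ph M - Ph' M\<bar> \<le> B"
  shows "\<bar>Ph 0 - Ph' 0\<bar> \<le> r ^ M * (B * (1 + (D+1)*(D+2)))"
proof -
  define pi where "pi j = (\<Prod>i\<in>{j..<M}. al i)" for j
  define pi' where "pi' j = (\<Prod>i\<in>{j..<M}. al' i)" for j
  define e where "e = \<bar>al M - al' M\<bar>"
  define Y where "Y = B * (D+1) * (D+2)"
  define X where "X = B + Y"
  have B0: "B \<ge> 0" using B2 by linarith
  have piS: "pi j = al j * pi (Suc j)" if "j < M" for j unfolding pi_def using that by (simp add: prod.atLeast_Suc_lessThan)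
  have piS': "pi' j = al' j * pi' (Suc j)" if "j < M" for j unfolding pi'_def using that by (simp add: prod.atLeast_Suc_lessThan)
  have piM: "pi M = 1" "pi' M = 1" unfolding pi_def pi'_def by auto
  have pib: "0 \<le> pi j \<and> pi j \<le> 1" for j unfolding pi_def using pos
    by (intro conjI prod_nonneg prod_le_1) (auto intro: less_imp_le)
  have pib': "0 \<le> pi' j \<and> pi' j \<le> 1" for j unfolding pi'_def using pos'
    by (intro conjI prod_nonneg prod_le_1) (auto intro: less_imp_le)
  have pir: "pi' 0 \<le> r ^ M"
  proof -
    have "pi' 0 \<le> (\<Prod>i\<in>{0..<M}. r)" unfolding pi'_def using pos' hi
      by (intro prod_mono) (auto intro: less_imp_le)
    then show ?thesis by simp
  qed
  have lnb: "0 \<le> ln (1 / al j) \<and> ln (1 / al j) \<le> ln (D+1)" if "j < M" for j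
  proof -
    have "0 < al j" "al j \<le> 1" "1/(D+1) \<le> al j" using pos lo that by auto
    moreover have "1 / al j \<le> D + 1" using calculation D by (simp add: field_simps)
    ultimately show ?thesis using D by (auto intro: ln_ge_zero)
  qed
  have KK: "ln (D+1) + r * K = K" unfolding r K using D by (simp add: field_simps)
  have P1: "0 \<le> Ph j \<and> Ph j \<le> K + pi j * Ph M" if "j \<le> M" for j
    using that
  proof (induction rule: inc_induct)
    case base then show ?case using T piM unfolding K using D by simp
  next
    case (step j)
    have eq: "Ph j = ln (1 / al j) + al j * Ph (Suc j)" using Pr step by auto
    have a: "0 < al j" "al j \<le> r" using pos hi step by auto
    have "al j * Ph (Suc j) \<le> al j * (K + pi (Suc j) * Ph M)" using step a by (intro mult_left_mono) auto
    also have "\<dots> = al j * K + pi j * Ph M" using piS[OF step(2)] by (simp add: algebra_simps)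
    also have "al j * K \<le> r * K" using a D unfolding K by (intro mult_right_mono) auto
    finally have "Ph j \<le> ln (1/al j) + r * K + pi j * Ph M" using eq by linarith
    then have up: "Ph j \<le> K + pi j * Ph M" using lnb[OF step(2)] KK by linarith
    have "0 \<le> Ph j" using eq lnb[OF step(2)] a step by (simp add: add_nonneg_nonneg)
    then show ?case using up by simp
  qed
  have P2: "\<bar>al j - al' j\<bar> = pi j * pi' j * e" if "j \<le> M" for j
    using that
  proof (induction rule: inc_induct)
    case base then show ?case using piM unfolding e_def by simp
  next
    case (step j)
    have s: "0 < al (Suc j)" "0 < al' (Suc j)" "1 \<le> dg j" using pos pos' dg step by auto
    have "al j - al' j = 1/(dg j + al (Suc j)) - 1/(dg j + al' (Suc j))" using ar ar' step by auto
    also have "\<dots> = (1/(dg j + al (Suc j))) * (1/(dg j + al' (Suc j))) * (al' (Suc j) - al (Suc j))"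
      using s by (simp add: field_simps)
    also have "\<dots> = al j * al' j * (al' (Suc j) - al (Suc j))" using ar ar' step by auto
    moreover have "0 < al j" "0 < al' j" using pos pos' step by auto
    ultimately have "\<bar>al j - al' j\<bar> = al j * al' j * \<bar>al (Suc j) - al' (Suc j)\<bar>"
      by (simp add: abs_mult abs_minus_commute)
    also have "\<dots> = al j * al' j * (pi (Suc j) * pi' (Suc j) * e)" using step by simp
    also have "\<dots> = pi j * pi' j * e" using piS[OF step(2)] piS'[OF step(2)] by (simp add: algebra_simps)
    finally show ?case .
  qed
  have P3: "\<bar>Ph j - Ph' j\<bar> \<le> pi' j * (X - Y * pi j)" if "j \<le> M" for j
    using that
  proof (induction rule: inc_induct)
    case base then show ?case using piM B2 unfolding X_def by simp
  next
    case (step j)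
    have s: "0 < al (Suc j)" "0 < al' (Suc j)" "1 \<le> dg j" using pos pos' dg step by auto
    have P1S: "0 \<le> Ph (Suc j)" "Ph (Suc j) \<le> K + pi (Suc j) * Ph M" using P1[of "Suc j"] step by auto
    have "\<bar>Ph j - Ph' j\<bar> \<le> \<bar>al (Suc j) - al' (Suc j)\<bar> * (1 + Ph (Suc j)) + (1/(dg j + al' (Suc j))) * \<bar>Ph (Suc j) - Ph' (Suc j)\<bar>"
      using step_bound[of "dg j" "al (Suc j)" "al' (Suc j)" "Ph (Suc j)" "Ph' (Suc j)"] s P1S
        Pr Pr' ar ar' step by auto
    also have "1/(dg j + al' (Suc j)) = al' j" using ar' step by auto
    also have "\<bar>al (Suc j) - al' (Suc j)\<bar> = pi (Suc j) * pi' (Suc j) * e" using P2 step by auto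
    finally have E: "\<bar>Ph j - Ph' j\<bar> \<le> pi (Suc j) * pi' (Suc j) * e * (1 + Ph (Suc j)) + al' j * \<bar>Ph (Suc j) - Ph' (Suc j)\<bar>" .
    have e0: "e \<ge> 0" unfolding e_def by simp
    have "e * (1 + Ph (Suc j)) \<le> e * (1 + K + pi (Suc j) * Ph M)" using P1S e0 by (intro mult_left_mono) auto
    also have "\<dots> \<le> e * (1 + K + Ph M)" using pib[of "Suc j"] T e0
      by (intro mult_left_mono) (auto simp: mult_left_le_one_le)
    also have "\<dots> \<le> B" using B1 unfolding e_def .
    finally have eb: "e * (1 + Ph (Suc j)) \<le> B" .
    have t1: "pi (Suc j) * pi' (Suc j) * e * (1 + Ph (Suc j)) \<le> pi (Suc j) * pi' (Suc j) * B"
      using eb pib pib' by (simp add: mult.assoc mult_left_mono)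
    have a': "0 < al' j" "1/(D+1) \<le> al' j" "al j \<le> r" using pos' lo hi step by auto
    have t2: "al' j * \<bar>Ph (Suc j) - Ph' (Suc j)\<bar> \<le> al' j * (pi' (Suc j) * (X - Y * pi (Suc j)))"
      using step a' by (intro mult_left_mono) auto
    have key: "B \<le> al' j * Y * (1 - al j)"
    proof -
      have "1 - al j \<ge> 1/(D+2)" using a' unfolding r using D by (simp add: field_simps)
      have "(1/(D+1)) * Y * (1/(D+2)) = B * ((D+1)/(D+1)) * ((D+2)/(D+2))" unfolding Y_def by simp
      then have "B = (1/(D+1)) * Y * (1/(D+2))" using D by simp
      also have "\<dots> \<le> al' j * Y * (1/(D+2))" using a' B0 D unfolding Y_def
        by (intro mult_right_mono) auto
      also have "\<dots> \<le> al' j * Y * (1 - al j)" using a' B0 D \<open>1 - al j \<ge> 1/(D+2)\<close> unfolding Y_def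
        by (intro mult_left_mono) auto
      finally show ?thesis .
    qed
    have "pi (Suc j) * pi' (Suc j) * B \<le> pi (Suc j) * pi' (Suc j) * (al' j * Y * (1 - al j))"
      using key pib pib' by (intro mult_left_mono) auto
    then have "\<bar>Ph j - Ph' j\<bar> \<le> pi (Suc j) * pi' (Suc j) * (al' j * Y * (1 - al j)) + al' j * (pi' (Suc j) * (X - Y * pi (Suc j)))"
      using E t1 t2 by linarith
    also have "\<dots> = pi' j * (X - Y * pi j)"
      using piS[OF step(2)] piS'[OF step(2)] by (simp add: algebra_simps)
    finally show ?case .
  qed
  have "\<bar>Ph 0 - Ph' 0\<bar> \<le> pi' 0 * (X - Y * pi 0)" using P3 by simp
  also have "\<dots> \<le> pi' 0 * X" using pib pib' B0 D unfolding Y_def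
    by (intro mult_left_mono) auto
  also have "\<dots> \<le> r ^ M * X" using pir B0 D unfolding X_def Y_def by (intro mult_right_mono) auto
  finally show ?thesis unfolding X_def Y_def by (simp add: algebra_simps)
qed



lemma tail_est:
  fixes N g C K x x' a a' P P' Q Q' :: real
  assumes N: "N \<ge> 1" and g: "0 < g" "g \<le> 1" and C: "C \<ge> 0" and K: "K \<ge> 0"
    and x: "x = 1/(N+g)" and x': "x' = 1/(N+1+g)"
    and a: "a = 1/(1+x)" and a': "a' = 1/(1+x')"
    and Q: "Q = ln (1/x) + x*C" and Q': "Q' = ln (1/x') + x'*C"
    and P: "P = ln (1/a) + a*Q" and P': "P' = ln (1/a') + a'*Q'"
  shows "\<bar>a - a'\<bar> * (1 + K + P) \<le> 3 + K + 2*C \<and> \<bar>P - P'\<bar> \<le> 3 + K + 2*C"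
proof -
  have x0: "0 < x" "x \<le> 1" unfolding x using N g by auto
  have x0': "0 < x'" "x' \<le> 1" unfolding x' using N g by auto
  have xd: "x - x' = x * x'" unfolding x x' using N g by (simp add: field_simps)
  have xx: "x * x' \<le> x" using x0 x0' by (simp add: mult_left_le)
  have ad: "\<bar>a - a'\<bar> \<le> x"
  proof -
    have e1: "a - a' = a * a' * (x' - x)" unfolding a a' using x0 x0' by (simp add: field_simps)
    have ab: "0 < a" "a \<le> 1" "0 < a'" "a' \<le> 1" unfolding a a' using x0 x0' by auto
    have xp: "0 \<le> x - x'" using xd x0 x0' by simp
    have aa: "0 \<le> a * a'" "a * a' \<le> 1" using ab by (auto intro: mult_le_one)
    have "\<bar>a - a'\<bar> = (a * a') * (x - x')" unfolding e1 using aa xp ab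
      by (simp add: abs_mult abs_minus_commute)
    also have "\<dots> \<le> 1 * (x - x')" using aa xp by (intro mult_right_mono) auto
    finally show ?thesis using xd xx by simp
  qed
  have lx: "0 \<le> ln (1/x)" using x0 by simp
  have xl: "x * ln (1/x) \<le> 1"
  proof -
    have "ln (1/x) \<le> 1/x - 1" using x0 by (intro ln_le_minus_one) auto
    then have "x * ln (1/x) \<le> x * (1/x - 1)" using x0 by (intro mult_left_mono) auto
    also have "\<dots> \<le> 1" using x0 by (simp add: field_simps)
    finally show ?thesis .
  qed
  have a0: "0 < a" "a \<le> 1" unfolding a using x0 by auto
  have Q0: "0 \<le> Q" unfolding Q using lx x0 C by simp
  have lna: "ln (1/a) \<le> x" unfolding a using x0 by (simp add: ln_add_one_self_le_self)
  have "a * Q \<le> Q" using a0 Q0 by (intro mult_left_le_one_le) auto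
  then have Pb: "P \<le> x + Q" unfolding P using lna by linarith
  have P0: "P \<ge> 0" unfolding P using a0 Q0 by simp
  have "x * C \<le> C" using x0 C by (intro mult_left_le_one_le) auto
  then have Qb: "Q \<le> ln (1/x) + C" unfolding Q by linarith
  have "\<bar>a - a'\<bar> * (1 + K + P) \<le> x * (1 + K + P)" using ad P0 K by (intro mult_right_mono) auto
  also have "\<dots> \<le> x * ((2 + K + C) + ln (1/x))" using Pb Qb x0 by (intro mult_left_mono) auto
  also have "\<dots> = x * (2 + K + C) + x * ln (1/x)" by (simp add: distrib_left)
  also have "\<dots> \<le> 1 * (2 + K + C) + 1"
  proof -
    have "x * (2 + K + C) \<le> 1 * (2 + K + C)" using x0 K C by (intro mult_right_mono) auto
    then show ?thesis using xl by linarith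
  qed
  finally have r1: "\<bar>a - a'\<bar> * (1 + K + P) \<le> 3 + K + 2*C" using C by simp
  have sb: "\<bar>P - P'\<bar> \<le> \<bar>x - x'\<bar> * (1 + Q) + (1/(1+x')) * \<bar>Q - Q'\<bar>"
    using step_bound[of 1 x x' Q Q'] x0 x0' Q0 unfolding P P' a a' by simp
  have "\<bar>Q - Q'\<bar> \<le> \<bar>ln (1/x) - ln (1/x')\<bar> + C * \<bar>x - x'\<bar>"
  proof -
    have "Q - Q' = (ln (1/x) - ln (1/x')) + C * (x - x')" unfolding Q Q' by (simp add: algebra_simps)
    moreover have "\<bar>C * (x - x')\<bar> = C * \<bar>x - x'\<bar>" using C by (simp add: abs_mult)
    ultimately show ?thesis using abs_triangle_ineq[of "ln (1/x) - ln (1/x')" "C * (x - x')"] by linarith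
  qed
  also have "\<bar>ln (1/x) - ln (1/x')\<bar> \<le> 1"
    using ln_diff_le[of "N+g" "N+1+g"] N g unfolding x x' by simp
  also have "C * \<bar>x - x'\<bar> \<le> C" using xd xx x0 x0' C by (intro mult_left_le) auto
  finally have Qd: "\<bar>Q - Q'\<bar> \<le> 1 + C" by simp
  have "\<bar>x - x'\<bar> \<le> x" using xd xx x0 x0' by simp
  then have "\<bar>x - x'\<bar> * (1 + Q) \<le> x * (1 + ln (1/x) + C)" using x0 Q0 Qb
    by (intro mult_mono) auto
  also have "\<dots> = x + x * ln (1/x) + x * C" by (simp add: algebra_simps)
  also have "\<dots> \<le> 2 + C" using xl x0 \<open>x * C \<le> C\<close> by linarith
  finally have t1: "\<bar>x - x'\<bar> * (1 + Q) \<le> 2 + C" .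
  have "(1/(1+x')) * \<bar>Q - Q'\<bar> \<le> 1 * (1 + C)" using Qd x0' by (intro mult_mono) auto
  then have "(1/(1+x')) * \<bar>Q - Q'\<bar> \<le> 1 + C" by simp
  then have p2: "\<bar>P - P'\<bar> \<le> 3 + 2*C" using sb t1 by linarith
  have p3: "\<bar>P - P'\<bar> \<le> 3 + K + 2*C" using p2 K by linarith
  show ?thesis using r1 p3 by (rule conjI)
qed



lemma per_N:
  fixes a :: "nat \<Rightarrow> nat" and n m N :: nat
  assumes apos: "\<forall>i\<le>n. a i > 0" and N: "N \<ge> 1" and m: "m \<ge> 2"
  defines "d \<equiv> beta_digits a n m N"
  defines "D \<equiv> real (Max (a ` {..n}))"
  shows "tailones (n+m+1) d"
    and "\<And>j. j < n+m \<Longrightarrow> 1 \<le> real (d j) \<and> real (d j) \<le> D"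
    and "D \<ge> 1"
    and "\<And>j. cf_alpha d j = 1 / (real (d j) + cf_alpha d (Suc j))"
    and "\<And>j. 0 < cf_alpha d j \<and> cf_alpha d j \<le> 1"
    and "\<And>j. brjuno_Phi (\<lambda>i. d (i + j)) = ln (1 / cf_alpha d j) + cf_alpha d j * brjuno_Phi (\<lambda>i. d (i + Suc j))"
    and "\<And>j. brjuno_Phi (\<lambda>i. d (i + j)) \<ge> 0"
    and "\<And>j. j < n+m \<Longrightarrow> 1/(D+1) \<le> cf_alpha d j"
    and "\<And>j. j + 1 < n+m \<Longrightarrow> cf_alpha d j \<le> (D+1)/(D+2)"
    and "cf_alpha d (n+m) = 1 / (real N + gold)"
    and "cf_alpha d (n+m-1) = 1 / (1 + cf_alpha d (n+m))"
    and "brjuno_Phi (\<lambda>i. d (i + Suc (n+m))) = brjuno_Phi (\<lambda>_. 1)"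
proof -
  have dv: "d i = (if i \<le> n then a i else if i = n + m then N else 1)" for i
    unfolding d_def beta_digits_def by simp
  have dge1: "1 \<le> d i" for i
  proof (cases "i \<le> n")
    case True then have "0 < a i" using apos by simp
    then show ?thesis using True dv[of i] by simp
  next
    case False then show ?thesis using N dv[of i] by simp
  qed
  have dtail: "d i = 1" if "n+m+1 \<le> i" for i using that dv[of i] by simp
  show T: "tailones (n+m+1) d" unfolding tailones_def using dge1 dtail by blast
  have Dge: "a j \<le> Max (a ` {..n})" if "j \<le> n" for j using that by (intro Max_ge) auto
  have a0: "1 \<le> a 0" using apos by (simp add: Suc_leI)
  have M1: "1 \<le> Max (a ` {..n})" using le_trans[OF a0 Dge[of 0]] by simp
  show D1: "D \<ge> 1" unfolding D_def using M1 by simp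
  show dig: "1 \<le> real (d j) \<and> real (d j) \<le> D" if "j < n+m" for j
  proof (cases "j \<le> n")
    case True
    then have "d j = a j" using dv[of j] by simp
    then show ?thesis using dge1[of j] Dge[OF True] unfolding D_def by simp
  next
    case False
    then have "d j = 1" using dv[of j] that by simp
    then show ?thesis using D1 by simp
  qed
  show rec: "cf_alpha d j = 1 / (real (d j) + cf_alpha d (Suc j))" for j by (rule alpha_rec[OF T])
  show bd: "0 < cf_alpha d j \<and> cf_alpha d j \<le> 1" for j by (rule alpha_bounds[OF T])
  show "brjuno_Phi (\<lambda>i. d (i + j)) = ln (1 / cf_alpha d j) + cf_alpha d j * brjuno_Phi (\<lambda>i. d (i + Suc j))" for j
    using Phi_rec[OF tailones_shift[OF T, of j]] unfolding cf_alpha_def by simp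
  show "brjuno_Phi (\<lambda>i. d (i + j)) \<ge> 0" for j by (rule Phi_nonneg[OF tailones_shift[OF T, of j]])
  show lo: "1/(D+1) \<le> cf_alpha d j" if "j < n+m" for j
  proof -
    have "real (d j) + cf_alpha d (Suc j) \<le> D + 1" using dig[OF that] bd[of "Suc j"] by linarith
    moreover have "0 < real (d j) + cf_alpha d (Suc j)" using dig[OF that] bd[of "Suc j"] by linarith
    ultimately show ?thesis unfolding rec[of j] by (intro divide_left_mono) auto
  qed
  show "cf_alpha d j \<le> (D+1)/(D+2)" if "j + 1 < n+m" for j
  proof -
    have l: "1/(D+1) \<le> cf_alpha d (Suc j)" using lo that by simp
    have "1 + 1/(D+1) \<le> real (d j) + cf_alpha d (Suc j)" using dig[of j] that l by simp
    moreover have p1: "0 < 1 + 1/(D+1)" using D1 by (simp add: add_pos_nonneg)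
    ultimately have p2: "0 < real (d j) + cf_alpha d (Suc j)" by linarith
    have "1 / (real (d j) + cf_alpha d (Suc j)) \<le> 1 / (1 + 1/(D+1))"
      using \<open>1 + 1/(D+1) \<le> real (d j) + cf_alpha d (Suc j)\<close> p1 p2
      by (intro divide_left_mono) auto
    also have "1 / (1 + 1/(D+1)) = (D+1)/(D+2)" using D1 by (simp add: field_simps)
    finally show ?thesis unfolding rec[of j] .
  qed
  have tailf: "(\<lambda>i. d (i + Suc (n+m))) = (\<lambda>_. 1)" using dtail by (intro ext) simp
  show "brjuno_Phi (\<lambda>i. d (i + Suc (n+m))) = brjuno_Phi (\<lambda>_. 1)" using tailf by simp
  have "cf_alpha d (Suc (n+m)) = gold" by (rule alpha_tail[OF T]) simp
  moreover have "d (n+m) = N" using dv[of "n+m"] m by simp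
  ultimately show "cf_alpha d (n+m) = 1 / (real N + gold)" using rec[of "n+m"] by simp
  have "\<not> (n+m-1 \<le> n)" "n+m-1 \<noteq> n+m" using m by auto
  then have "d (n+m-1) = 1" using dv[of "n+m-1"] by simp
  moreover have "Suc (n+m-1) = n+m" using m by simp
  ultimately show "cf_alpha d (n+m-1) = 1 / (1 + cf_alpha d (n+m))" using rec[of "n+m-1"] by simp
qed



theorem mainTheorem9:
  fixes a :: "nat \<Rightarrow> nat" and n :: nat and \<epsilon> :: real
  assumes "\<forall>i\<le>n. a i > 0"
    and "\<epsilon> > 0"
  shows "\<exists>m0::nat. m0 > 0 \<and> (\<forall>m\<ge>m0. \<forall>N::nat. N \<ge> 1 \<longrightarrow>
           brjuno_Phi (beta_digits a n m (N + 1)) - brjuno_Phi (beta_digits a n m N) < \<epsilon>)"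
proof -
  note apos = assms(1)
  define D where "D = real (Max (a ` {..n}))"
  define r where "r = (D+1)/(D+2)"
  define K where "K = (D+2) * ln (D+1)"
  define C where "C = brjuno_Phi (\<lambda>_. 1)"
  define B where "B = 3 + K + 2*C"
  define W where "W = B * (1 + (D+1)*(D+2))"
  have D1: "D \<ge> 1" using per_N(3)[OF apos, of 1 2] unfolding D_def by simp
  have C0: "C \<ge> 0" unfolding C_def by (rule Phi_nonneg[of 0]) (simp add: tailones_def)
  have K0: "K \<ge> 0" unfolding K_def using D1 by simp
  have DD: "(D+1)*(D+2) \<ge> 0" using D1 by simp
  have W1: "0 < 1 + (D+1)*(D+2)" using DD by linarith
  have W0: "W > 0" unfolding W_def B_def using C0 K0 W1 by (intro mult_pos_pos) auto
  have r1: "r < 1" "0 < r" unfolding r_def using D1 by auto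
  obtain k0 where k0: "r ^ k0 < \<epsilon> / W" using real_arch_pow_inv[OF divide_pos_pos[OF assms(2) W0] r1(1)] by blast
  have main: "\<bar>brjuno_Phi (beta_digits a n m N) - brjuno_Phi (beta_digits a n m (N+1))\<bar> < \<epsilon>"
    if m: "m \<ge> k0 + 2" and N: "N \<ge> 1" for m N
  proof -
    define d where "d = beta_digits a n m N"
    define d' where "d' = beta_digits a n m (N+1)"
    define M where "M = n + m - 1"
    have m2: "m \<ge> 2" using m by simp
    have N': "N + 1 \<ge> 1" by simp
    note f = per_N[OF apos N m2, folded d_def D_def]
    note f' = per_N[OF apos N' m2, folded d'_def D_def]
    have dd: "d' j = d j" if "j < n + m" for j using that unfolding d_def d'_def beta_digits_def by auto
    have SM: "Suc M = n + m" unfolding M_def using m2 by simp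
    have c: "\<bar>brjuno_Phi (\<lambda>i. d (i + 0)) - brjuno_Phi (\<lambda>i. d' (i + 0))\<bar> \<le> r ^ M * (B * (1 + (D+1)*(D+2)))"
    proof (rule core[where dg="\<lambda>j. real (d j)" and al="cf_alpha d" and al'="cf_alpha d'" and K=K])
      show "D \<ge> 1" by (rule D1)
      show "r = (D+1)/(D+2)" by (rule r_def)
      show "K = (D+2) * ln (D+1)" by (rule K_def)
      show "\<forall>j<M. 1 \<le> real (d j)" using f(2) unfolding M_def by auto
      show "\<forall>j<M. cf_alpha d j = 1 / (real (d j) + cf_alpha d (Suc j))" using f(4) by blast
      show "\<forall>j<M. cf_alpha d' j = 1 / (real (d j) + cf_alpha d' (Suc j))" proof (intro allI impI)
        fix j assume "j < M"
        then have "d' j = d j" using dd unfolding M_def by simp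
        then show "cf_alpha d' j = 1 / (real (d j) + cf_alpha d' (Suc j))" using f'(4)[of j] by simp
      qed
      show "\<forall>j\<le>M. 0 < cf_alpha d j \<and> cf_alpha d j \<le> 1" using f(5) by auto
      show "\<forall>j\<le>M. 0 < cf_alpha d' j \<and> cf_alpha d' j \<le> 1" using f'(5) by auto
      show "\<forall>j<M. 1/(D+1) \<le> cf_alpha d j \<and> 1/(D+1) \<le> cf_alpha d' j" using f(8) f'(8) unfolding M_def by auto
      show "\<forall>j<M. cf_alpha d j \<le> r \<and> cf_alpha d' j \<le> r" using f(9) f'(9) unfolding M_def r_def by auto
      show "\<forall>j<M. brjuno_Phi (\<lambda>i. d (i + j)) = ln (1 / cf_alpha d j) + cf_alpha d j * brjuno_Phi (\<lambda>i. d (i + Suc j))"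
        using f(6) by blast
      show "\<forall>j<M. brjuno_Phi (\<lambda>i. d' (i + j)) = ln (1 / cf_alpha d' j) + cf_alpha d' j * brjuno_Phi (\<lambda>i. d' (i + Suc j))"
        using f'(6) by blast
      show "brjuno_Phi (\<lambda>i. d (i + M)) \<ge> 0" using f(7) by auto
      have te: "\<bar>cf_alpha d M - cf_alpha d' M\<bar> * (1 + K + brjuno_Phi (\<lambda>i. d (i + M))) \<le> 3 + K + 2*C \<and>
        \<bar>brjuno_Phi (\<lambda>i. d (i + M)) - brjuno_Phi (\<lambda>i. d' (i + M))\<bar> \<le> 3 + K + 2*C"
      proof (rule tail_est[where N="real N" and g=gold and x="cf_alpha d (n+m)" and x'="cf_alpha d' (n+m)"
            and Q="brjuno_Phi (\<lambda>i. d (i + (n+m)))" and Q'="brjuno_Phi (\<lambda>i. d' (i + (n+m)))"])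
        show "1 \<le> real N" using N by simp
        show "0 < gold" "gold \<le> 1" using gold_props by auto
        show "0 \<le> C" "0 \<le> K" using C0 K0 by auto
        show "cf_alpha d (n+m) = 1 / (real N + gold)" using f(10) .
        show "cf_alpha d' (n+m) = 1 / (real N + 1 + gold)" using f'(10) by simp
        show "cf_alpha d M = 1 / (1 + cf_alpha d (n+m))" using f(11) unfolding M_def .
        show "cf_alpha d' M = 1 / (1 + cf_alpha d' (n+m))" using f'(11) unfolding M_def .
        show "brjuno_Phi (\<lambda>i. d (i + (n+m))) = ln (1 / cf_alpha d (n+m)) + cf_alpha d (n+m) * C"
          using f(6)[of "n+m"] f(12) unfolding C_def by simp
        show "brjuno_Phi (\<lambda>i. d' (i + (n+m))) = ln (1 / cf_alpha d' (n+m)) + cf_alpha d' (n+m) * C"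
          using f'(6)[of "n+m"] f'(12) unfolding C_def by simp
        show "brjuno_Phi (\<lambda>i. d (i + M)) = ln (1 / cf_alpha d M) + cf_alpha d M * brjuno_Phi (\<lambda>i. d (i + (n+m)))"
          using f(6)[of M] SM by simp
        show "brjuno_Phi (\<lambda>i. d' (i + M)) = ln (1 / cf_alpha d' M) + cf_alpha d' M * brjuno_Phi (\<lambda>i. d' (i + (n+m)))"
          using f'(6)[of M] SM by simp
      qed
      show "\<bar>cf_alpha d M - cf_alpha d' M\<bar> * (1 + K + brjuno_Phi (\<lambda>i. d (i + M))) \<le> B"
        using te unfolding B_def by simp
      show "\<bar>brjuno_Phi (\<lambda>i. d (i + M)) - brjuno_Phi (\<lambda>i. d' (i + M))\<bar> \<le> B"
        using te unfolding B_def by simp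
    qed
    have "r ^ M \<le> r ^ k0" using r1 m unfolding M_def by (intro power_decreasing) auto
    then have "r ^ M * W \<le> r ^ k0 * W" using W0 by (intro mult_right_mono) auto
    also have "\<dots> < \<epsilon>" using k0 W0 by (simp add: pos_less_divide_eq)
    finally show ?thesis using c unfolding d_def d'_def W_def by simp
  qed
  show ?thesis
  proof (intro exI[of _ "k0 + 2"] conjI allI impI)
    fix m N :: nat assume "k0 + 2 \<le> m" "1 \<le> N"
    then show "brjuno_Phi (beta_digits a n m (N + 1)) - brjuno_Phi (beta_digits a n m N) < \<epsilon>"
      using main[of m N] abs_ge_minus_self[of "brjuno_Phi (beta_digits a n m N) - brjuno_Phi (beta_digits a n m (N+1))"] by linarith
  qed simp
qed

end
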